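(* Let $G=(V,E,\sigma)$ be a graph as in the context and $\Gamma$ a nonempty family of walks. Then the function $p\mapsto\mathrm{Mod}_p(\Gamma)$ is continuous on $[1,\infty)$.
   Context: Let $G=(V,E,\sigma)$ be a finite simple graph (directed or undirected) with edge weights $\sigma:E\to(0,\infty)$. A walk is a string of edges $e_1\dots e_r$, $r\ge1$, $e_i=(v_i,v_{i+1})\in E$, with $\rho$-length $\ell_\rho(\gamma)=\sum_i\rho(e_i)$. $A(\Gamma)=\{\rho:E\to\mathbb{R}:\rho\ge0,\ \ell_\rho(\gamma)\ge1\ \forall\gamma\in\Gamma\}$, $\mathcal{E}_p(\rho)=\sum_e\sigma(e)|\rho(e)|^p$, $\mathrm{Mod}_p(\Gamma)=\inf_{\rho\in A(\Gamma)}\mathcal{E}_p(\rho)$. *)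

theory Defs
  imports "HOL-Analysis.Analysis"
begin

text \<open>Edges are of an abstract type 'e; a walk is represented by its string of edges
  (a nonempty list).\<close>

definition dsimple :: "('v \<times> 'v) set \<Rightarrow> bool" where
  "dsimple E \<longleftrightarrow> finite E \<and> (\<forall>e\<in>E. fst e \<noteq> snd e)"

definition usimple :: "'v set set \<Rightarrow> bool" where
  "usimple E \<longleftrightarrow> finite E \<and> (\<forall>e\<in>E. card e = 2)"

definition dwalks :: "('v \<times> 'v) set \<Rightarrow> ('v \<times> 'v) list set" where
  "dwalks E = {es. es \<noteq> [] \<and> set es \<subseteq> E \<and>
      (\<forall>i. Suc i < length es \<longrightarrow> snd (es ! i) = fst (es ! Suc i))}"

definition uwalks :: "'v set set \<Rightarrow> 'v set list set" where
  "uwalks E = {es. es \<noteq> [] \<and> set es \<subseteq> E \<and>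
      (\<exists>vs. length vs = Suc (length es) \<and>
            (\<forall>i<length es. es ! i = {vs ! i, vs ! Suc i}))}"

definition rho_length :: "('e \<Rightarrow> real) \<Rightarrow> 'e list \<Rightarrow> real" where
  "rho_length \<rho> \<gamma> = sum_list (map \<rho> \<gamma>)"

definition admissible :: "'e set \<Rightarrow> 'e list set \<Rightarrow> ('e \<Rightarrow> real) set" where
  "admissible E \<Gamma> = {\<rho>. (\<forall>e\<in>E. \<rho> e \<ge> 0) \<and> (\<forall>\<gamma>\<in>\<Gamma>. rho_length \<rho> \<gamma> \<ge> 1)}"

definition energy :: "'e set \<Rightarrow> ('e \<Rightarrow> real) \<Rightarrow> real \<Rightarrow> ('e \<Rightarrow> real) \<Rightarrow> real" where
  "energy E \<sigma> p \<rho> = (\<Sum>e\<in>E. \<sigma> e * \<bar>\<rho> e\<bar> powr p)"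

definition Modulus :: "'e set \<Rightarrow> ('e \<Rightarrow> real) \<Rightarrow> 'e list set \<Rightarrow> real \<Rightarrow> real" where
  "Modulus E \<sigma> \<Gamma> p = Inf (energy E \<sigma> p ` admissible E \<Gamma>)"

end

theory Submission
  imports Defs
begin

lemma powr_diff_bound:
  fixes a p q :: real
  assumes a0: "0 \<le> a" and a1: "a \<le> 1" and p1: "1 \<le> p" and pq: "p \<le> q"
  shows "a powr p \<le> a powr q + (q - p)"
proof (cases "a = 0")
  case True then show ?thesis using pq by simp
next
  case False
  then have apos: "a > 0" using a0 by simp
  have e: "a powr (q - p) \<ge> 1 + (q - p) * ln a"
    using exp_ge_add_one_self[of "(q - p) * ln a"] apos by (simp add: powr_def mult.commute)
  have l: "- ln a \<le> 1 / a"
  proof -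
    have "ln (1/a) \<le> 1/a - 1" using ln_le_minus_one[of "1/a"] apos by simp
    then show ?thesis using apos by (simp add: ln_div)
  qed
  have h1: "1 - a powr (q - p) \<le> (q - p) * (1 / a)"
  proof -
    have "1 - a powr (q - p) \<le> (q - p) * (- ln a)" using e by simp
    also have "\<dots> \<le> (q - p) * (1 / a)" using l pq by (intro mult_left_mono) auto
    finally show ?thesis .
  qed
  have h0: "0 \<le> 1 - a powr (q - p)"
    using powr_le1[of "q - p" a] a0 a1 pq by simp
  have ap: "a powr p \<le> a"
    using powr_le_one_le[of a p] apos a1 p1 by simp
  have "a powr p - a powr q = a powr p * (1 - a powr (q - p))"
    using apos by (simp add: algebra_simps powr_diff)
  also have "\<dots> \<le> a * ((q - p) * (1 / a))"
    using ap h0 h1 apos by (intro mult_mono) auto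
  also have "\<dots> = q - p" using apos by simp
  finally show ?thesis by simp
qed

lemma powr_any_bound:
  fixes a p q :: real
  assumes a0: "0 \<le> a" and a1: "a \<le> 1" and p1: "1 \<le> p" and q1: "1 \<le> q"
  shows "a powr p \<le> a powr q + \<bar>p - q\<bar>"
proof (cases "p \<le> q")
  case True then show ?thesis using powr_diff_bound[OF a0 a1 p1 True] by simp
next
  case False
  then have "a powr p \<le> a powr q" using powr_mono'[of q p a] a0 a1 by simp
  then show ?thesis by simp
qed

lemma modulus_bound:
  fixes E :: "'e set"
  assumes fin: "finite E" and sig: "\<forall>e\<in>E. \<sigma> e \<ge> 0"
    and walks: "\<forall>\<gamma>\<in>\<Gamma>. \<gamma> \<noteq> [] \<and> set \<gamma> \<subseteq> E"
    and p1: "1 \<le> p" and q1: "1 \<le> q"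
  shows "Modulus E \<sigma> \<Gamma> p \<le> Modulus E \<sigma> \<Gamma> q + \<bar>p - q\<bar> * (\<Sum>e\<in>E. \<sigma> e)"
proof -
  let ?S = "\<Sum>e\<in>E. \<sigma> e"
  have ne: "admissible E \<Gamma> \<noteq> {}"
  proof -
    have "(\<lambda>_. 1) \<in> admissible E \<Gamma>"
      unfolding admissible_def rho_length_def
    proof (intro CollectI conjI ballI)
      fix \<gamma> assume "\<gamma> \<in> \<Gamma>"
      then have "\<gamma> \<noteq> []" using walks by auto
      then show "1 \<le> sum_list (map (\<lambda>_. 1::real) \<gamma>)"
        by (simp add: sum_list_triv Suc_le_eq)
    qed auto
    then show ?thesis by auto
  qed
  have bdd: "bdd_below (energy E \<sigma> p ` admissible E \<Gamma>)"
    unfolding bdd_below_def energy_def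
    by (rule exI[of _ 0]) (auto intro!: sum_nonneg mult_nonneg_nonneg simp: sig)
  have "Modulus E \<sigma> \<Gamma> p - \<bar>p - q\<bar> * ?S \<le> Inf (energy E \<sigma> q ` admissible E \<Gamma>)"
  proof (rule cInf_greatest)
    show "energy E \<sigma> q ` admissible E \<Gamma> \<noteq> {}" using ne by auto
  next
    fix x assume "x \<in> energy E \<sigma> q ` admissible E \<Gamma>"
    then obtain \<rho> where \<rho>: "\<rho> \<in> admissible E \<Gamma>" and x: "x = energy E \<sigma> q \<rho>" by auto
    define \<rho>' where "\<rho>' = (\<lambda>e. min (\<rho> e) 1)"
    have \<rho>nn: "\<forall>e\<in>E. \<rho> e \<ge> 0" and \<rho>len: "\<forall>\<gamma>\<in>\<Gamma>. rho_length \<rho> \<gamma> \<ge> 1"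
      using \<rho> unfolding admissible_def by auto
    have adm: "\<rho>' \<in> admissible E \<Gamma>"
      unfolding admissible_def
    proof (intro CollectI conjI ballI)
      fix e assume "e \<in> E" then show "0 \<le> \<rho>' e" using \<rho>nn by (simp add: \<rho>'_def)
    next
      fix \<gamma> assume g: "\<gamma> \<in> \<Gamma>"
      then have sub: "set \<gamma> \<subseteq> E" using walks by auto
      show "1 \<le> rho_length \<rho>' \<gamma>"
      proof (cases "\<exists>e\<in>set \<gamma>. \<rho> e \<ge> 1")
        case True
        then obtain e where e: "e \<in> set \<gamma>" "\<rho> e \<ge> 1" by auto
        have "\<rho>' e = 1" using e by (simp add: \<rho>'_def)
        moreover have "\<rho>' e \<le> sum_list (map \<rho>' \<gamma>)"
          using e(1) sub \<rho>nn
          by (intro member_le_sum_list[of "\<rho>' e" "map \<rho>' \<gamma>", THEN order_trans]) (auto simp: \<rho>'_def)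
        ultimately show ?thesis unfolding rho_length_def by simp
      next
        case False
        then have "map \<rho>' \<gamma> = map \<rho> \<gamma>" by (auto simp: \<rho>'_def)
        then have "rho_length \<rho>' \<gamma> = rho_length \<rho> \<gamma>" by (simp only: rho_length_def)
        then show ?thesis using \<rho>len g by simp
      qed
    qed
    have "energy E \<sigma> p \<rho>' \<le> energy E \<sigma> q \<rho> + \<bar>p - q\<bar> * ?S"
    proof -
      have "energy E \<sigma> p \<rho>' \<le> (\<Sum>e\<in>E. \<sigma> e * \<bar>\<rho> e\<bar> powr q + \<bar>p - q\<bar> * \<sigma> e)"
        unfolding energy_def
      proof (rule sum_mono)
        fix e assume eE: "e \<in> E"
        have r0: "0 \<le> \<rho>' e" "\<rho>' e \<le> 1" using \<rho>nn eE by (auto simp: \<rho>'_def)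
        have "\<bar>\<rho>' e\<bar> powr p \<le> \<bar>\<rho>' e\<bar> powr q + \<bar>p - q\<bar>"
          using powr_any_bound[of "\<rho>' e" p q] r0 p1 q1 by simp
        also have "\<bar>\<rho>' e\<bar> powr q \<le> \<bar>\<rho> e\<bar> powr q"
          using r0 \<rho>nn eE q1 by (intro powr_mono2) (auto simp: \<rho>'_def)
        finally have "\<bar>\<rho>' e\<bar> powr p \<le> \<bar>\<rho> e\<bar> powr q + \<bar>p - q\<bar>" by simp
        then have "\<sigma> e * \<bar>\<rho>' e\<bar> powr p \<le> \<sigma> e * (\<bar>\<rho> e\<bar> powr q + \<bar>p - q\<bar>)"
          using sig eE by (intro mult_left_mono) auto
        then show "\<sigma> e * \<bar>\<rho>' e\<bar> powr p \<le> \<sigma> e * \<bar>\<rho> e\<bar> powr q + \<bar>p - q\<bar> * \<sigma> e"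
          by (simp add: algebra_simps)
      qed
      also have "\<dots> = energy E \<sigma> q \<rho> + \<bar>p - q\<bar> * ?S"
        unfolding energy_def by (simp add: sum.distrib sum_distrib_left)
      finally show ?thesis .
    qed
    moreover have "Modulus E \<sigma> \<Gamma> p \<le> energy E \<sigma> p \<rho>'"
      unfolding Modulus_def using adm bdd by (intro cInf_lower) auto
    ultimately show "Modulus E \<sigma> \<Gamma> p - \<bar>p - q\<bar> * ?S \<le> x" using x by simp
  qed
  then show ?thesis unfolding Modulus_def by simp
qed

lemma modulus_continuous:
  fixes E :: "'e set"
  assumes fin: "finite E" and sig: "\<forall>e\<in>E. \<sigma> e \<ge> 0"
    and walks: "\<forall>\<gamma>\<in>\<Gamma>. \<gamma> \<noteq> [] \<and> set \<gamma> \<subseteq> E"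
  shows "continuous_on {1..} (\<lambda>p. Modulus E \<sigma> \<Gamma> p)"
  unfolding continuous_on_iff
proof (intro ballI allI impI)
  fix x :: real and \<epsilon> :: real
  assume x: "x \<in> {1..}" and \<epsilon>: "0 < \<epsilon>"
  let ?S = "\<Sum>e\<in>E. \<sigma> e"
  have S0: "?S \<ge> 0" using sig by (simp add: sum_nonneg)
  show "\<exists>d>0. \<forall>x'\<in>{1..}. dist x' x < d \<longrightarrow> dist (Modulus E \<sigma> \<Gamma> x') (Modulus E \<sigma> \<Gamma> x) < \<epsilon>"
  proof (intro exI[of _ "\<epsilon> / (?S + 1)"] conjI ballI impI)
    show "0 < \<epsilon> / (?S + 1)" using \<epsilon> S0 by simp
  next
    fix y assume y: "y \<in> {1..}" and d: "dist y x < \<epsilon> / (?S + 1)"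
    have b1: "Modulus E \<sigma> \<Gamma> y \<le> Modulus E \<sigma> \<Gamma> x + \<bar>y - x\<bar> * ?S"
      using modulus_bound[OF fin sig walks, of y x] x y by simp
    have b2: "Modulus E \<sigma> \<Gamma> x \<le> Modulus E \<sigma> \<Gamma> y + \<bar>x - y\<bar> * ?S"
      using modulus_bound[OF fin sig walks, of x y] x y by simp
    have "\<bar>y - x\<bar> * ?S < \<epsilon>"
    proof -
      have "\<bar>y - x\<bar> * (?S + 1) < \<epsilon>" using d S0 by (simp add: dist_real_def field_simps)
      moreover have "\<bar>y - x\<bar> * ?S \<le> \<bar>y - x\<bar> * (?S + 1)" by (simp add: mult_left_mono)
      ultimately show ?thesis by linarith
    qed
    then show "dist (Modulus E \<sigma> \<Gamma> y) (Modulus E \<sigma> \<Gamma> x) < \<epsilon>"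
      using b1 b2 by (simp add: dist_real_def abs_minus_commute)
  qed
qed

theorem mainTheorem9:
  shows "(\<forall>(E :: ('v \<times> 'v) set) (\<sigma> :: ('v \<times> 'v) \<Rightarrow> real) \<Gamma>.
            dsimple E \<and> (\<forall>e\<in>E. \<sigma> e > 0) \<and> \<Gamma> \<subseteq> dwalks E \<and> \<Gamma> \<noteq> {} \<longrightarrow>
            continuous_on {1..} (\<lambda>p. Modulus E \<sigma> \<Gamma> p))
       \<and> (\<forall>(E :: 'v set set) (\<sigma> :: 'v set \<Rightarrow> real) \<Gamma>.
            usimple E \<and> (\<forall>e\<in>E. \<sigma> e > 0) \<and> \<Gamma> \<subseteq> uwalks E \<and> \<Gamma> \<noteq> {} \<longrightarrow>
            continuous_on {1..} (\<lambda>p. Modulus E \<sigma> \<Gamma> p))"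
proof (intro conjI allI impI)
  fix E :: "('v \<times> 'v) set" and \<sigma> :: "('v \<times> 'v) \<Rightarrow> real" and \<Gamma>
  assume a: "dsimple E \<and> (\<forall>e\<in>E. \<sigma> e > 0) \<and> \<Gamma> \<subseteq> dwalks E \<and> \<Gamma> \<noteq> {}"
  show "continuous_on {1..} (\<lambda>p. Modulus E \<sigma> \<Gamma> p)"
  proof (rule modulus_continuous)
    show "finite E" using a by (simp add: dsimple_def)
    show "\<forall>e\<in>E. \<sigma> e \<ge> 0" using a by (auto intro: less_imp_le)
    show "\<forall>\<gamma>\<in>\<Gamma>. \<gamma> \<noteq> [] \<and> set \<gamma> \<subseteq> E" using a by (auto simp: dwalks_def)
  qed
next
  fix E :: "'v set set" and \<sigma> :: "'v set \<Rightarrow> real" and \<Gamma>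
  assume a: "usimple E \<and> (\<forall>e\<in>E. \<sigma> e > 0) \<and> \<Gamma> \<subseteq> uwalks E \<and> \<Gamma> \<noteq> {}"
  show "continuous_on {1..} (\<lambda>p. Modulus E \<sigma> \<Gamma> p)"
  proof (rule modulus_continuous)
    show "finite E" using a by (simp add: usimple_def)
    show "\<forall>e\<in>E. \<sigma> e \<ge> 0" using a by (auto intro: less_imp_le)
    show "\<forall>\<gamma>\<in>\<Gamma>. \<gamma> \<noteq> [] \<and> set \<gamma> \<subseteq> E" using a by (auto simp: uwalks_def)
  qed
qed

end
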